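(* Let $a>0$, $k_p,k_d>0$, $z_0=x_0+iy_0\in\mathbb{C}$, $N>\rho>0$, and let $A_{\rho,N}=\{(\ell_1,\ell_2)\in\mathbb{Z}^2:\rho a<|z_{\ell_1,\ell_2}|<Na\}$ where $z_{\ell_1,\ell_2}=(\ell_1a-x_0)+i(\ell_2a-y_0)$. With $\epsilon^{(i)},\epsilon^{(\pm)},\Delta^{(i)},\Delta^{d(i,\pm)},\Delta^{d(\pm)}$ as defined in the context, define for each $(\ell_1,\ell_2)$ $$F(\ell_1,\ell_2)=\tfrac12k_p\big((\Delta^{(1)})^2+(\Delta^{(2)})^2\big)+\tfrac12k_d\big((\Delta^{d(1,+)})^2+(\Delta^{d(2,+)})^2+(\Delta^{d(1,-)})^2+(\Delta^{d(2,-)})^2+(\Delta^{d(+)})^2+(\Delta^{d(-)})^2\big)$$ and the elastic energy $E_{\rho,N}(x_0,y_0)=\sum_{(\ell_1,\ell_2)\in A_{\rho,N}}F(\ell_1,\ell_2)$. Define the truncated Epstein–Hurwitz zeta value $$\zeta_{\rho,N}(2,-z_0/a)=\sum_{(\ell_1,\ell_2)\in A_{\rho,N}}\frac{1}{(\ell_1-x_0/a)^2+(\ell_2-y_0/a)^2}.$$ Then $$E_{\rho,N}(x_0,y_0)=\frac{1}{8\pi^2}k_da^2\,\zeta_{\rho,N}(2,-z_0/a)+\sum_{(\ell_1,\ell_2)\in A_{\rho,N}}r(\ell_1,\ell_2),$$ where $r(\ell_1,\ell_2)=F(\ell_1,\ell_2)-\frac{k_d}{8\pi^2}\frac{a^4}{|z_{\ell_1,\ell_2}|^2}$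 satisfies $r(\ell_1,\ell_2)\,|z_{\ell_1,\ell_2}|^2/a^2\to0$ as $|z_{\ell_1,\ell_2}|\to\infty$ (with $a,x_0,y_0,k_p,k_d$ fixed); i.e. up to terms of higher order in $a^2/|z_{\ell_1,\ell_2}|^2$ the energy equals $\frac{1}{8\pi^2}k_da^2\zeta_{\rho,N}(2,-z_0/a)$.
   Context: Notation for a single screw dislocation in the simple cubic lattice with spacing $a$: $s(\ell_1,\ell_2)=z_{\ell_1,\ell_2}/|z_{\ell_1,\ell_2}|$; $\epsilon^{(1)}=\frac{a}{2\pi}\operatorname{Arg}\frac{s(\ell_1+1,\ell_2)}{s(\ell_1,\ell_2)}$, $\epsilon^{(2)}=\frac{a}{2\pi}\operatorname{Arg}\frac{s(\ell_1,\ell_2+1)}{s(\ell_1,\ell_2)}$, $\epsilon^{(\pm)}=\frac{a}{2\pi}\operatorname{Arg}\frac{s(\ell_1+1,\ell_2\pm1)}{s(\ell_1,\ell_2)}$ with $\operatorname{Arg}$ the principal argument in $(-\pi,\pi]$; for $i=1,2$: $\Delta^{(i)}=\sqrt{a^2+(\epsilon^{(i)})^2}-a$, $\Delta^{d(i,\pm)}=\sqrt{(a\pm\epsilon^{(i)})^2+a^2}-\sqrt2a$, $\Delta^{d(\pm)}=\sqrt{2a^2+(\epsilon^{(\pm)})^2}-\sqrt2a$ (all evaluated at $(\ell_1,\ell_2)$). $k_p$ and $k_d$ are the spring constants of the axis-parallel and diagonal springs respectively; the vertical springs have zero length change. *)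

theory Defs
  imports Complex_Main
begin

text \<open>Lattice positions relative to the dislocation core z0 = x0 + i y0.\<close>
definition zl :: "real \<Rightarrow> real \<Rightarrow> real \<Rightarrow> int \<Rightarrow> int \<Rightarrow> complex" where
  "zl a x0 y0 l1 l2 = Complex (of_int l1 * a - x0) (of_int l2 * a - y0)"

definition sl :: "real \<Rightarrow> real \<Rightarrow> real \<Rightarrow> int \<Rightarrow> int \<Rightarrow> complex" where
  "sl a x0 y0 l1 l2 = zl a x0 y0 l1 l2 / complex_of_real (cmod (zl a x0 y0 l1 l2))"

definition eps1 :: "real \<Rightarrow> real \<Rightarrow> real \<Rightarrow> int \<Rightarrow> int \<Rightarrow> real" where
  "eps1 a x0 y0 l1 l2 = a / (2 * pi) * Arg (sl a x0 y0 (l1 + 1) l2 / sl a x0 y0 l1 l2)"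

definition eps2 :: "real \<Rightarrow> real \<Rightarrow> real \<Rightarrow> int \<Rightarrow> int \<Rightarrow> real" where
  "eps2 a x0 y0 l1 l2 = a / (2 * pi) * Arg (sl a x0 y0 l1 (l2 + 1) / sl a x0 y0 l1 l2)"

definition epsp :: "real \<Rightarrow> real \<Rightarrow> real \<Rightarrow> int \<Rightarrow> int \<Rightarrow> real" where
  "epsp a x0 y0 l1 l2 = a / (2 * pi) * Arg (sl a x0 y0 (l1 + 1) (l2 + 1) / sl a x0 y0 l1 l2)"

definition epsm :: "real \<Rightarrow> real \<Rightarrow> real \<Rightarrow> int \<Rightarrow> int \<Rightarrow> real" where
  "epsm a x0 y0 l1 l2 = a / (2 * pi) * Arg (sl a x0 y0 (l1 + 1) (l2 - 1) / sl a x0 y0 l1 l2)"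

definition Dax :: "real \<Rightarrow> real \<Rightarrow> real" where
  "Dax a e = sqrt (a\<^sup>2 + e\<^sup>2) - a"

definition Ddi_p :: "real \<Rightarrow> real \<Rightarrow> real" where
  "Ddi_p a e = sqrt ((a + e)\<^sup>2 + a\<^sup>2) - sqrt 2 * a"

definition Ddi_m :: "real \<Rightarrow> real \<Rightarrow> real" where
  "Ddi_m a e = sqrt ((a - e)\<^sup>2 + a\<^sup>2) - sqrt 2 * a"

definition Dd :: "real \<Rightarrow> real \<Rightarrow> real" where
  "Dd a e = sqrt (2 * a\<^sup>2 + e\<^sup>2) - sqrt 2 * a"

definition Fenergy :: "real \<Rightarrow> real \<Rightarrow> real \<Rightarrow> real \<Rightarrow> real \<Rightarrow> int \<Rightarrow> int \<Rightarrow> real" where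
  "Fenergy kp kd a x0 y0 l1 l2 =
     (let e1 = eps1 a x0 y0 l1 l2; e2 = eps2 a x0 y0 l1 l2;
          ep = epsp a x0 y0 l1 l2; em = epsm a x0 y0 l1 l2 in
      1/2 * kp * ((Dax a e1)\<^sup>2 + (Dax a e2)\<^sup>2)
      + 1/2 * kd * ((Ddi_p a e1)\<^sup>2 + (Ddi_p a e2)\<^sup>2 + (Ddi_m a e1)\<^sup>2 + (Ddi_m a e2)\<^sup>2
                    + (Dd a ep)\<^sup>2 + (Dd a em)\<^sup>2))"

definition annulus :: "real \<Rightarrow> real \<Rightarrow> real \<Rightarrow> real \<Rightarrow> real \<Rightarrow> (int \<times> int) set" where
  "annulus a x0 y0 \<rho> N = {(l1, l2). \<rho> * a < cmod (zl a x0 y0 l1 l2) \<and> cmod (zl a x0 y0 l1 l2) < N * a}"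

definition energy :: "real \<Rightarrow> real \<Rightarrow> real \<Rightarrow> real \<Rightarrow> real \<Rightarrow> real \<Rightarrow> real \<Rightarrow> real" where
  "energy kp kd a x0 y0 \<rho> N = (\<Sum>(l1, l2)\<in>annulus a x0 y0 \<rho> N. Fenergy kp kd a x0 y0 l1 l2)"

definition zeta_trunc :: "real \<Rightarrow> real \<Rightarrow> real \<Rightarrow> real \<Rightarrow> real \<Rightarrow> real" where
  "zeta_trunc a x0 y0 \<rho> N = (\<Sum>(l1, l2)\<in>annulus a x0 y0 \<rho> N.
      1 / ((of_int l1 - x0 / a)\<^sup>2 + (of_int l2 - y0 / a)\<^sup>2))"

definition rem :: "real \<Rightarrow> real \<Rightarrow> real \<Rightarrow> real \<Rightarrow> real \<Rightarrow> int \<Rightarrow> int \<Rightarrow> real" where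
  "rem kp kd a x0 y0 l1 l2 = Fenergy kp kd a x0 y0 l1 l2
      - kd / (8 * pi\<^sup>2) * a ^ 4 / (cmod (zl a x0 y0 l1 l2))\<^sup>2"

end

theory Submission
  imports Defs "HOL-Analysis.Analysis"
begin


lemma cmod_zl_sq: "(cmod (zl a x0 y0 l1 l2))\<^sup>2 = (of_int l1 * a - x0)\<^sup>2 + (of_int l2 * a - y0)\<^sup>2"
  by (simp add: zl_def complex_norm)

lemma term_eq:
  assumes "a > 0"
  shows "1 / (8 * pi\<^sup>2) * kd * a\<^sup>2 * (1 / ((of_int l1 - x0 / a)\<^sup>2 + (of_int l2 - y0 / a)\<^sup>2))
     = kd / (8 * pi\<^sup>2) * a ^ 4 / (cmod (zl a x0 y0 l1 l2))\<^sup>2"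
proof -
  define D where "D = (of_int l1 - x0 / a)\<^sup>2 + (of_int l2 - y0 / a)\<^sup>2"
  have c: "(cmod (zl a x0 y0 l1 l2))\<^sup>2 = a\<^sup>2 * D"
    unfolding cmod_zl_sq D_def using assms by (simp add: power2_eq_square field_simps)
  have "1 / (8 * pi\<^sup>2) * kd * a\<^sup>2 * (1 / D) = kd / (8 * pi\<^sup>2) * a ^ 4 / (a\<^sup>2 * D)"
    using assms by (cases "D = 0") (simp_all add: power2_eq_square power4_eq_xxxx field_simps)
  then show ?thesis unfolding c D_def .
qed

lemma part1:
  assumes "a > 0"
  shows "energy kp kd a x0 y0 \<rho> N
           = 1 / (8 * pi\<^sup>2) * kd * a\<^sup>2 * zeta_trunc a x0 y0 \<rho> N
             + (\<Sum>(l1, l2)\<in>annulus a x0 y0 \<rho> N. rem kp kd a x0 y0 l1 l2)"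
proof -
  have "1 / (8 * pi\<^sup>2) * kd * a\<^sup>2 * zeta_trunc a x0 y0 \<rho> N
     = (\<Sum>(l1, l2)\<in>annulus a x0 y0 \<rho> N. kd / (8 * pi\<^sup>2) * a ^ 4 / (cmod (zl a x0 y0 l1 l2))\<^sup>2)"
    unfolding zeta_trunc_def sum_distrib_left
    by (rule sum.cong[OF refl]) (clarify, simp only: prod.case term_eq[OF assms])
  then show ?thesis
    unfolding energy_def rem_def
    by (simp add: sum_subtractf split_def)
qed



lemma arg_approx:
  fixes v :: complex
  assumes "norm v \<le> 1/2"
  shows "\<bar>Arg (1 + v) - Im v\<bar> \<le> 2 * (norm v)\<^sup>2"
proof -
  have nz: "1 + v \<noteq> 0"
  proof
    assume "1 + v = 0" then have "v = -1" by (metis add.commute add_eq_0_iff)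
    then show False using assms by simp
  qed
  have "norm (Ln (1 + v) - v) \<le> (norm v)\<^sup>2 / (1 - norm v)"
    using Ln_approx_linear[of v] assms by simp
  also have "\<dots> \<le> 2 * (norm v)\<^sup>2"
  proof -
    have n0: "1 - norm v > 0" using assms by simp
    have "(norm v)\<^sup>2 * (1 - 2 * norm v) \<ge> 0" using assms by (intro mult_nonneg_nonneg) auto
    then have "(norm v)\<^sup>2 \<le> 2 * (norm v)\<^sup>2 * (1 - norm v)" by (simp add: algebra_simps)
    then show ?thesis by (simp add: pos_divide_le_eq[OF n0])
  qed
  finally have h: "norm (Ln (1 + v) - v) \<le> 2 * (norm v)\<^sup>2" .
  have "\<bar>Arg (1 + v) - Im v\<bar> = \<bar>Im (Ln (1 + v) - v)\<bar>"
    using nz by (simp add: Arg_eq_Im_Ln)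
  also have "\<dots> \<le> norm (Ln (1 + v) - v)" by (rule abs_Im_le_cmod)
  finally show ?thesis using h by linarith
qed

lemma arg_ratio:
  fixes z c :: complex
  assumes "z \<noteq> 0" "z + c \<noteq> 0"
  shows "Arg (((z + c) / complex_of_real (cmod (z + c))) / (z / complex_of_real (cmod z))) = Arg (1 + c / z)"
proof -
  have "((z + c) / complex_of_real (cmod (z + c))) / (z / complex_of_real (cmod z))
      = complex_of_real (cmod z / cmod (z + c)) * (1 + c / z)"
    using assms by (simp add: field_simps)
  moreover have "cmod z / cmod (z + c) > 0" using assms by simp
  ultimately show ?thesis by (metis Arg_times_of_real)
qed

lemma abs3: "\<bar>x + y - z\<bar> \<le> \<bar>x\<bar> + \<bar>y\<bar> + \<bar>z::real\<bar>"
  by arith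

lemma Dax_bound:
  assumes "a > 0"
  shows "\<bar>Dax a e\<bar> \<le> e\<^sup>2 / (2 * a)"
proof -
  have lo: "a \<le> sqrt (a\<^sup>2 + e\<^sup>2)"
    using assms by (metis abs_of_pos le_add_same_cancel1 real_sqrt_abs real_sqrt_le_mono zero_le_power2)
  have "(a + e\<^sup>2 / (2 * a))\<^sup>2 = a\<^sup>2 + 2 * a * (e\<^sup>2 / (2 * a)) + (e\<^sup>2 / (2 * a))\<^sup>2"
    by (simp add: power2_sum)
  moreover have "2 * a * (e\<^sup>2 / (2 * a)) = e\<^sup>2" using assms by simp
  ultimately have "a\<^sup>2 + e\<^sup>2 \<le> (a + e\<^sup>2 / (2 * a))\<^sup>2" by simp
  then have "sqrt (a\<^sup>2 + e\<^sup>2) \<le> a + e\<^sup>2 / (2 * a)"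
    using assms by (intro real_le_lsqrt) auto
  then show ?thesis using lo unfolding Dax_def by linarith
qed

lemma Dd_bound:
  assumes "a > 0"
  shows "\<bar>Dd a e\<bar> \<le> e\<^sup>2 / (2 * a)"
proof -
  let ?s = "sqrt 2 * a"
  have s2: "?s\<^sup>2 = 2 * a\<^sup>2" by (simp add: power_mult_distrib)
  have sp: "?s > 0" using assms by simp
  have lo: "?s \<le> sqrt (2 * a\<^sup>2 + e\<^sup>2)"
    using sp s2 by (metis le_add_same_cancel1 real_le_rsqrt zero_le_power2 less_imp_le)
  have "2 * a\<^sup>2 + e\<^sup>2 \<le> (?s + e\<^sup>2 / (2 * a))\<^sup>2"
  proof -
    have "(?s + e\<^sup>2 / (2 * a))\<^sup>2 = ?s\<^sup>2 + 2 * ?s * (e\<^sup>2 / (2 * a)) + (e\<^sup>2 / (2 * a))\<^sup>2"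
      by (simp add: power2_sum)
    moreover have "2 * ?s * (e\<^sup>2 / (2 * a)) \<ge> e\<^sup>2"
    proof -
      have "2 * ?s * (e\<^sup>2 / (2 * a)) = sqrt 2 * e\<^sup>2" using assms by simp
      moreover have "sqrt 2 \<ge> 1" by simp
      ultimately show ?thesis by (metis mult_1 mult_right_mono zero_le_power2)
    qed
    moreover have "(e\<^sup>2 / (2 * a))\<^sup>2 \<ge> 0" by simp
    ultimately show ?thesis using s2 by linarith
  qed
  then have "sqrt (2 * a\<^sup>2 + e\<^sup>2) \<le> ?s + e\<^sup>2 / (2 * a)"
    using assms sp by (intro real_le_lsqrt) auto
  then show ?thesis using lo unfolding Dd_def by linarith
qed

lemma Ddi_p_bound:
  assumes "a > 0" "\<bar>e\<bar> \<le> a"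
  shows "\<bar>(Ddi_p a e)\<^sup>2 - e\<^sup>2 / 2\<bar> \<le> 4 * \<bar>e\<bar> ^ 3 / a"
proof -
  define s where "s = sqrt 2 * a"
  define P where "P = sqrt ((a + e)\<^sup>2 + a\<^sup>2)"
  have s2: "s\<^sup>2 = 2 * a\<^sup>2" unfolding s_def by (simp add: power_mult_distrib)
  have sp: "s > 0" unfolding s_def using assms by simp
  have P0: "P \<ge> 0" unfolding P_def by simp
  have P2: "P\<^sup>2 = 2 * a\<^sup>2 + 2 * a * e + e\<^sup>2" 
  proof -
    have "P\<^sup>2 = (a + e)\<^sup>2 + a\<^sup>2" unfolding P_def by (simp add: add_nonneg_nonneg)
    then show ?thesis by (simp add: power2_eq_square algebra_simps)
  qed
  define Q where "Q = P + s"
  have Qs: "Q \<ge> s" unfolding Q_def using P0 by simp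
  have Qp: "Q > 0" using Qs sp by simp
  define D where "D = P - s"
  have DD: "Ddi_p a e = D" unfolding Ddi_p_def D_def P_def s_def by simp
  have DQ: "D * Q = e * (2 * a + e)" unfolding D_def Q_def using P2 s2
    by (simp add: power2_eq_square algebra_simps)
  have Dabs: "\<bar>D\<bar> * Q \<le> 3 * a * \<bar>e\<bar>"
  proof -
    have "\<bar>D\<bar> * Q = \<bar>e\<bar> * \<bar>2 * a + e\<bar>" using DQ Qp by (metis abs_mult abs_of_pos)
    also have "\<dots> \<le> \<bar>e\<bar> * (3 * a)" using assms by (intro mult_left_mono) auto
    finally show ?thesis by (simp add: algebra_simps)
  qed
  have sD: "\<bar>2 * s * D\<bar> \<le> 6 * a * \<bar>e\<bar>"
  proof -
    have "\<bar>D\<bar> * s \<le> \<bar>D\<bar> * Q" using Qs by (simp add: mult_left_mono)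
    then have "\<bar>D\<bar> * s \<le> 3 * a * \<bar>e\<bar>" using Dabs by linarith
    then show ?thesis using sp by (simp add: abs_mult algebra_simps)
  qed
  define X where "X = 2 * (2 * a + e)\<^sup>2 - Q\<^sup>2"
  have Xeq: "X = 6 * a * e + e\<^sup>2 - 2 * s * D"
    unfolding X_def Q_def D_def using P2 s2 by (simp add: power2_eq_square algebra_simps)
  have Xb: "\<bar>X\<bar> \<le> 13 * a * \<bar>e\<bar>"
  proof -
    have ae: "\<bar>6 * a * e\<bar> = 6 * a * \<bar>e\<bar>" using assms by (simp add: abs_mult)
    have "\<bar>X\<bar> \<le> 6 * a * \<bar>e\<bar> + e\<^sup>2 + \<bar>2 * s * D\<bar>" unfolding Xeq using ae abs3[of "6 * a * e" "e\<^sup>2" "2 * s * D"] by simp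
    moreover have "e\<^sup>2 \<le> a * \<bar>e\<bar>" using assms
      by (metis abs_ge_zero abs_mult_self_eq mult_right_mono power2_eq_square)
    ultimately show ?thesis using sD by linarith
  qed
  have key: "(D\<^sup>2 - e\<^sup>2 / 2) * (2 * Q\<^sup>2) = e\<^sup>2 * X"
  proof -
    have "D\<^sup>2 * Q\<^sup>2 = e\<^sup>2 * (2 * a + e)\<^sup>2" using DQ by (metis power_mult_distrib)
    then show ?thesis unfolding X_def by (simp add: algebra_simps)
  qed
  have "\<bar>D\<^sup>2 - e\<^sup>2 / 2\<bar> * (4 * a\<^sup>2) \<le> \<bar>D\<^sup>2 - e\<^sup>2 / 2\<bar> * (2 * Q\<^sup>2)"
  proof -
    have "s\<^sup>2 \<le> Q\<^sup>2" using Qs sp by (simp add: power_mono)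
    then show ?thesis using s2 by (intro mult_left_mono) auto
  qed
  also have "\<dots> = e\<^sup>2 * \<bar>X\<bar>" using key Qp by (metis abs_mult abs_of_nonneg zero_le_power2 mult_nonneg_nonneg zero_le_numeral)
  also have "\<dots> \<le> e\<^sup>2 * (13 * a * \<bar>e\<bar>)" using Xb by (simp add: mult_left_mono)
  finally have "\<bar>D\<^sup>2 - e\<^sup>2 / 2\<bar> * (4 * a\<^sup>2) \<le> e\<^sup>2 * (13 * a * \<bar>e\<bar>)" .
  then have "\<bar>D\<^sup>2 - e\<^sup>2 / 2\<bar> \<le> e\<^sup>2 * (13 * a * \<bar>e\<bar>) / (4 * a\<^sup>2)"
    using assms by (simp add: field_simps)
  also have "\<dots> = 13 * \<bar>e\<bar> ^ 3 / (4 * a)" using assms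
    by (simp add: power2_eq_square power3_eq_cube field_simps)
  also have "\<dots> \<le> 4 * \<bar>e\<bar> ^ 3 / a" using assms by (simp add: field_simps)
  finally show ?thesis unfolding DD .
qed

lemma Ddi_m_eq: "Ddi_m a e = Ddi_p a (- e)"
  unfolding Ddi_m_def Ddi_p_def by simp



lemma S_bound:
  fixes b h e1 e2 I1 I2 d1 d2 :: real
  assumes "e1 = b * (I1 + d1)" "e2 = b * (I2 + d2)" "I1\<^sup>2 + I2\<^sup>2 = h\<^sup>2"
    "\<bar>I1\<bar> \<le> h" "\<bar>I2\<bar> \<le> h" "\<bar>d1\<bar> \<le> 2 * h\<^sup>2" "\<bar>d2\<bar> \<le> 2 * h\<^sup>2" "0 \<le> h" "h \<le> 1" "0 \<le> b"
  shows "\<bar>e1\<^sup>2 + e2\<^sup>2 - b\<^sup>2 * h\<^sup>2\<bar> \<le> 16 * b\<^sup>2 * h ^ 3"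
proof -
  have eq: "e1\<^sup>2 + e2\<^sup>2 - b\<^sup>2 * h\<^sup>2 = b\<^sup>2 * (2 * I1 * d1 + d1\<^sup>2 + 2 * I2 * d2 + d2\<^sup>2)"
    unfolding assms(1,2) assms(3)[symmetric] by (simp add: power2_eq_square algebra_simps)
  have h4: "h ^ 4 \<le> h ^ 3" using assms by (simp add: power_decreasing)
  have b1: "\<bar>2 * I1 * d1\<bar> \<le> 4 * h ^ 3"
  proof -
    have "\<bar>I1\<bar> * \<bar>d1\<bar> \<le> h * (2 * h\<^sup>2)" using assms by (intro mult_mono) auto
    then show ?thesis by (simp add: abs_mult power2_eq_square power3_eq_cube)
  qed
  have b2: "\<bar>2 * I2 * d2\<bar> \<le> 4 * h ^ 3"
  proof -
    have "\<bar>I2\<bar> * \<bar>d2\<bar> \<le> h * (2 * h\<^sup>2)" using assms by (intro mult_mono) auto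
    then show ?thesis by (simp add: abs_mult power2_eq_square power3_eq_cube)
  qed
  have c1: "d1\<^sup>2 \<le> 4 * h ^ 4"
  proof -
    have "\<bar>d1\<bar>\<^sup>2 \<le> (2 * h\<^sup>2)\<^sup>2" using assms by (intro power_mono) auto
    then show ?thesis by (simp add: power2_eq_square power4_eq_xxxx)
  qed
  have c2: "d2\<^sup>2 \<le> 4 * h ^ 4"
  proof -
    have "\<bar>d2\<bar>\<^sup>2 \<le> (2 * h\<^sup>2)\<^sup>2" using assms by (intro power_mono) auto
    then show ?thesis by (simp add: power2_eq_square power4_eq_xxxx)
  qed
  have in1: "\<bar>2 * I1 * d1 + d1\<^sup>2 + 2 * I2 * d2 + d2\<^sup>2\<bar> \<le> 16 * h ^ 3"
    using b1 b2 c1 c2 h4 by (smt (verit) zero_le_power2)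
  have "\<bar>e1\<^sup>2 + e2\<^sup>2 - b\<^sup>2 * h\<^sup>2\<bar> = b\<^sup>2 * \<bar>2 * I1 * d1 + d1\<^sup>2 + 2 * I2 * d2 + d2\<^sup>2\<bar>"
    unfolding eq by (simp add: abs_mult)
  also have "\<dots> \<le> b\<^sup>2 * (16 * h ^ 3)" using in1 by (intro mult_left_mono) auto
  finally show ?thesis by simp
qed

lemma sq_le_of_abs: "\<bar>x::real\<bar> \<le> y \<Longrightarrow> x\<^sup>2 \<le> y\<^sup>2"
  by (metis abs_ge_zero order_trans power2_abs power_mono)

lemma assemble:
  fixes kp kd a b h E A1 A2 Q1 Q2 R1 R2 S :: real
  assumes "0 \<le> kp" "0 \<le> kd" "0 < a" "0 \<le> h" "h \<le> 1" "0 \<le> b" "E = 4 * b * h"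
    "\<bar>A1\<bar> \<le> E\<^sup>2 / (2 * a)" "\<bar>A2\<bar> \<le> E\<^sup>2 / (2 * a)"
    "\<bar>Q1\<bar> \<le> E\<^sup>2 / (2 * a)" "\<bar>Q2\<bar> \<le> E\<^sup>2 / (2 * a)"
    "\<bar>R1\<bar> \<le> 8 * E ^ 3 / a" "\<bar>R2\<bar> \<le> 8 * E ^ 3 / a"
    "\<bar>S\<bar> \<le> 16 * b\<^sup>2 * h ^ 3"
  shows "\<bar>1/2 * kp * (A1\<^sup>2 + A2\<^sup>2) + 1/2 * kd * (Q1\<^sup>2 + Q2\<^sup>2) + 1/2 * kd * (R1 + R2) + 1/2 * kd * S\<bar>
     \<le> ((kp + kd) * 256 * b ^ 4 / (4 * a\<^sup>2) + 512 * kd * b ^ 3 / a + 8 * kd * b\<^sup>2) * h ^ 3"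
proof -
  define X where "X = 256 * b ^ 4 * h ^ 3 / (4 * a\<^sup>2)"
  have E4: "(E\<^sup>2 / (2 * a))\<^sup>2 \<le> X"
  proof -
    have "(E\<^sup>2 / (2 * a))\<^sup>2 = 256 * b ^ 4 * h ^ 4 / (4 * a\<^sup>2)"
      using assms(7) by (simp add: power2_eq_square power4_eq_xxxx field_simps)
    also have "\<dots> \<le> X" unfolding X_def using assms
      by (intro divide_right_mono mult_left_mono) (auto simp: power_decreasing)
    finally show ?thesis .
  qed
  have A1: "A1\<^sup>2 \<le> X" using sq_le_of_abs[OF assms(8)] E4 by linarith
  have A2: "A2\<^sup>2 \<le> X" using sq_le_of_abs[OF assms(9)] E4 by linarith
  have Q1: "Q1\<^sup>2 \<le> X" using sq_le_of_abs[OF assms(10)] E4 by linarith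
  have Q2: "Q2\<^sup>2 \<le> X" using sq_le_of_abs[OF assms(11)] E4 by linarith
  have E3: "8 * E ^ 3 / a = 512 * b ^ 3 * h ^ 3 / a" using assms(7) by (simp add: power3_eq_cube)
  have t1: "kp * (A1\<^sup>2 + A2\<^sup>2) \<le> kp * (2 * X)" using A1 A2 assms(1) by (intro mult_left_mono) auto
  have t2: "kd * (Q1\<^sup>2 + Q2\<^sup>2) \<le> kd * (2 * X)" using Q1 Q2 assms(2) by (intro mult_left_mono) auto
  have t3: "\<bar>kd * (R1 + R2)\<bar> \<le> kd * (2 * (512 * b ^ 3 * h ^ 3 / a))"
  proof -
    have "\<bar>R1 + R2\<bar> \<le> 2 * (512 * b ^ 3 * h ^ 3 / a)" using assms(12,13) E3 by linarith
    from mult_left_mono[OF this assms(2)] show ?thesis using assms(2) by (simp add: abs_mult)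
  qed
  have t4: "\<bar>kd * S\<bar> \<le> kd * (16 * b\<^sup>2 * h ^ 3)" using assms(2,14) by (simp add: abs_mult mult_left_mono)
  have p1: "0 \<le> kp * (A1\<^sup>2 + A2\<^sup>2)" using assms(1) by simp
  have p2: "0 \<le> kd * (Q1\<^sup>2 + Q2\<^sup>2)" using assms(2) by simp
  have rhs: "((kp + kd) * 256 * b ^ 4 / (4 * a\<^sup>2) + 512 * kd * b ^ 3 / a + 8 * kd * b\<^sup>2) * h ^ 3
      = 1/2 * (kp * (2 * X)) + 1/2 * (kd * (2 * X)) + 1/2 * (kd * (2 * (512 * b ^ 3 * h ^ 3 / a)))
        + 1/2 * (kd * (16 * b\<^sup>2 * h ^ 3))"
    unfolding X_def using assms(3) by (simp add: field_simps)
  have gen: "\<And>x1 x2 x3 x4 y1 y2 y3 y4::real. x1 \<le> y1 \<Longrightarrow> x2 \<le> y2 \<Longrightarrow> \<bar>x3\<bar> \<le> y3 \<Longrightarrow> \<bar>x4\<bar> \<le> y4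
     \<Longrightarrow> 0 \<le> x1 \<Longrightarrow> 0 \<le> x2 \<Longrightarrow> \<bar>1/2*x1 + 1/2*x2 + 1/2*x3 + 1/2*x4\<bar> \<le> 1/2*y1 + 1/2*y2 + 1/2*y3 + 1/2*y4"
    by arith
  show ?thesis unfolding rhs using gen[OF t1 t2 t3 t4 p1 p2] by (simp only: mult.assoc)
qed



lemma zl_shift1: "zl a x0 y0 (l1 + 1) l2 = zl a x0 y0 l1 l2 + complex_of_real a"
  by (simp add: zl_def complex_eq_iff algebra_simps)
lemma zl_shift2: "zl a x0 y0 l1 (l2 + 1) = zl a x0 y0 l1 l2 + \<i> * complex_of_real a"
  by (simp add: zl_def complex_eq_iff algebra_simps)
lemma zl_shiftp: "zl a x0 y0 (l1 + 1) (l2 + 1) = zl a x0 y0 l1 l2 + (1 + \<i>) * complex_of_real a"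
  by (simp add: zl_def complex_eq_iff algebra_simps)
lemma zl_shiftm: "zl a x0 y0 (l1 + 1) (l2 - 1) = zl a x0 y0 l1 l2 + (1 - \<i>) * complex_of_real a"
  by (simp add: zl_def complex_eq_iff algebra_simps)

lemma sl_Arg:
  assumes "zl a x0 y0 m1 m2 = zl a x0 y0 l1 l2 + c" "zl a x0 y0 l1 l2 \<noteq> 0" "zl a x0 y0 l1 l2 + c \<noteq> 0"
  shows "Arg (sl a x0 y0 m1 m2 / sl a x0 y0 l1 l2) = Arg (1 + c / zl a x0 y0 l1 l2)"
  unfolding sl_def assms(1) using arg_ratio[OF assms(2,3)] .

lemma shift_nz:
  fixes z c :: complex
  assumes "norm c \<le> 2 * a" "4 * a \<le> norm z" "a > 0"
  shows "z + c \<noteq> 0"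
proof -
  have "norm z - norm c \<le> norm (z + c)" by (metis norm_diff_ineq)
  then show ?thesis using assms by auto
qed

lemma eps_decomp:
  fixes v :: complex
  assumes "norm v \<le> 1/2" "0 \<le> b"
  defines "d \<equiv> Arg (1 + v) - Im v"
  shows "b * Arg (1 + v) = b * (Im v + d)" "\<bar>d\<bar> \<le> 2 * (norm v)\<^sup>2"
    "\<bar>b * Arg (1 + v)\<bar> \<le> b * (norm v + 2 * (norm v)\<^sup>2)"
proof -
  show "b * Arg (1 + v) = b * (Im v + d)" unfolding d_def by simp
  show dd: "\<bar>d\<bar> \<le> 2 * (norm v)\<^sup>2" unfolding d_def by (rule arg_approx[OF assms(1)])
  have "\<bar>Arg (1 + v)\<bar> \<le> \<bar>Im v\<bar> + \<bar>d\<bar>" unfolding d_def by simp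
  also have "\<dots> \<le> norm v + 2 * (norm v)\<^sup>2" using dd abs_Im_le_cmod[of v] by linarith
  finally show "\<bar>b * Arg (1 + v)\<bar> \<le> b * (norm v + 2 * (norm v)\<^sup>2)"
    using assms(2) by (simp add: abs_mult mult_left_mono)
qed

lemma eps_bound_E:
  fixes eps b n h :: real
  assumes "\<bar>eps\<bar> \<le> b * (n + 2 * n\<^sup>2)" "0 \<le> n" "n \<le> 2 * h" "h \<le> 1/4" "0 \<le> b"
  shows "\<bar>eps\<bar> \<le> 4 * b * h"
proof -
  have "n\<^sup>2 \<le> (2 * h)\<^sup>2" using assms by (intro power_mono) auto
  then have "2 * n\<^sup>2 \<le> 8 * h\<^sup>2" by (simp add: power2_eq_square)
  moreover have "8 * h\<^sup>2 \<le> 2 * h"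
  proof -
    have "h \<ge> 0" using assms by linarith
    then have "(4 * h) * h \<le> 1 * h" using assms by (intro mult_right_mono) auto
    then show ?thesis by (simp add: power2_eq_square)
  qed
  ultimately have "n + 2 * n\<^sup>2 \<le> 4 * h" using assms by linarith
  then have "b * (n + 2 * n\<^sup>2) \<le> b * (4 * h)" using assms by (intro mult_left_mono) auto
  then show ?thesis using assms by simp
qed

lemma D_bounds:
  assumes "a > 0" "\<bar>e\<bar> \<le> E" "E \<le> a"
  shows "\<bar>Dax a e\<bar> \<le> E\<^sup>2 / (2 * a)" "\<bar>Dd a e\<bar> \<le> E\<^sup>2 / (2 * a)"
    "\<bar>(Ddi_p a e)\<^sup>2 + (Ddi_m a e)\<^sup>2 - e\<^sup>2\<bar> \<le> 8 * E ^ 3 / a"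
proof -
  have sq: "e\<^sup>2 / (2 * a) \<le> E\<^sup>2 / (2 * a)"
    using sq_le_of_abs[OF assms(2)] assms(1) by (intro divide_right_mono) auto
  show "\<bar>Dax a e\<bar> \<le> E\<^sup>2 / (2 * a)" using Dax_bound[OF assms(1), of e] sq by linarith
  show "\<bar>Dd a e\<bar> \<le> E\<^sup>2 / (2 * a)" using Dd_bound[OF assms(1), of e] sq by linarith
  have ea: "\<bar>e\<bar> \<le> a" using assms by linarith
  have b1: "\<bar>(Ddi_p a e)\<^sup>2 - e\<^sup>2 / 2\<bar> \<le> 4 * \<bar>e\<bar> ^ 3 / a" by (rule Ddi_p_bound[OF assms(1) ea])
  have b2: "\<bar>(Ddi_m a e)\<^sup>2 - e\<^sup>2 / 2\<bar> \<le> 4 * \<bar>e\<bar> ^ 3 / a"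
    using Ddi_p_bound[OF assms(1), of "-e"] ea unfolding Ddi_m_eq by simp
  have e3: "4 * \<bar>e\<bar> ^ 3 / a \<le> 4 * E ^ 3 / a"
    using assms by (intro divide_right_mono mult_left_mono power_mono) auto
  show "\<bar>(Ddi_p a e)\<^sup>2 + (Ddi_m a e)\<^sup>2 - e\<^sup>2\<bar> \<le> 8 * E ^ 3 / a"
    using b1 b2 e3 by linarith
qed

lemma rem_bound:
  fixes a kp kd x0 y0 :: real and l1 l2 :: int
  assumes "a > 0" "kp \<ge> 0" "kd \<ge> 0" "4 * a \<le> cmod (zl a x0 y0 l1 l2)"
  shows "\<bar>rem kp kd a x0 y0 l1 l2\<bar> \<le> ((kp + kd) * 256 * (a / (2 * pi)) ^ 4 / (4 * a\<^sup>2)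
      + 512 * kd * (a / (2 * pi)) ^ 3 / a + 8 * kd * (a / (2 * pi))\<^sup>2) * (a / cmod (zl a x0 y0 l1 l2)) ^ 3"
proof -
  define z where "z = zl a x0 y0 l1 l2"
  define r where "r = cmod z"
  define b where "b = a / (2 * pi)"
  define h where "h = a / r"
  define w where "w = complex_of_real a / z"
  have r4: "4 * a \<le> r" using assms(4) unfolding r_def z_def .
  have rp: "r > 0" using r4 assms(1) by simp
  have z0: "z \<noteq> 0" using rp unfolding r_def by auto
  have b0: "b \<ge> 0" unfolding b_def using assms(1) by simp
  have h0: "h \<ge> 0" unfolding h_def using assms(1) rp by simp
  have h4: "h \<le> 1/4" unfolding h_def using r4 rp assms(1) by (simp add: field_simps)
  have nw: "norm w = h" unfolding w_def h_def r_def using assms(1) by (simp add: norm_divide)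
  have n1i: "norm (1 + \<i>) \<le> 2" using norm_triangle_ineq[of 1 \<i>] by simp
  have n1mi: "norm (1 - \<i>) \<le> 2" using norm_triangle_ineq4[of 1 \<i>] by simp
  have nz1: "z + complex_of_real a \<noteq> 0" using assms(1) r4 unfolding r_def by (intro shift_nz[of _ a]) auto
  have nz2: "z + \<i> * complex_of_real a \<noteq> 0" using assms(1) r4 unfolding r_def
    by (intro shift_nz[of _ a]) (auto simp: norm_mult)
  have nzp: "z + (1 + \<i>) * complex_of_real a \<noteq> 0" using assms(1) r4 n1i unfolding r_def
    by (intro shift_nz[of _ a]) (auto simp: norm_mult)
  have nzm: "z + (1 - \<i>) * complex_of_real a \<noteq> 0" using assms(1) r4 n1mi unfolding r_def
    by (intro shift_nz[of _ a]) (auto simp: norm_mult)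
  define v1 where "v1 = w"
  define v2 where "v2 = \<i> * w"
  define vp where "vp = (1 + \<i>) * w"
  define vm where "vm = (1 - \<i>) * w"
  have e1: "eps1 a x0 y0 l1 l2 = b * Arg (1 + v1)"
    unfolding eps1_def b_def v1_def w_def
    using sl_Arg[OF zl_shift1 z0[unfolded z_def] nz1[unfolded z_def]] by (simp add: z_def)
  have e2: "eps2 a x0 y0 l1 l2 = b * Arg (1 + v2)"
    unfolding eps2_def b_def v2_def w_def
    using sl_Arg[OF zl_shift2 z0[unfolded z_def] nz2[unfolded z_def]] by (simp add: z_def)
  have ep: "epsp a x0 y0 l1 l2 = b * Arg (1 + vp)"
    unfolding epsp_def b_def vp_def w_def
    using sl_Arg[OF zl_shiftp z0[unfolded z_def] nzp[unfolded z_def]] by (simp add: z_def)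
  have em: "epsm a x0 y0 l1 l2 = b * Arg (1 + vm)"
    unfolding epsm_def b_def vm_def w_def
    using sl_Arg[OF zl_shiftm z0[unfolded z_def] nzm[unfolded z_def]] by (simp add: z_def)
  have nv1: "norm v1 = h" unfolding v1_def using nw .
  have nv2: "norm v2 = h" unfolding v2_def using nw by (simp add: norm_mult)
  have nvp: "norm vp \<le> 2 * h" unfolding vp_def using nw n1i h0 by (simp add: norm_mult mult_right_mono)
  have nvm: "norm vm \<le> 2 * h" unfolding vm_def using nw n1mi h0 by (simp add: norm_mult mult_right_mono)
  have s1: "norm v1 \<le> 1/2" using nv1 h4 by simp
  have s2: "norm v2 \<le> 1/2" using nv2 h4 by simp
  have sp: "norm vp \<le> 1/2" using nvp h4 by simp
  have sm: "norm vm \<le> 1/2" using nvm h4 by simp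
  define E where "E = 4 * b * h"
  define eps_1 where "eps_1 = eps1 a x0 y0 l1 l2"
  define eps_2 where "eps_2 = eps2 a x0 y0 l1 l2"
  define eps_p where "eps_p = epsp a x0 y0 l1 l2"
  define eps_m where "eps_m = epsm a x0 y0 l1 l2"
  have E1: "\<bar>eps_1\<bar> \<le> E" unfolding E_def eps_1_def e1
    using eps_decomp(3)[OF s1 b0] nv1 h0 h4 b0 by (intro eps_bound_E[of _ b "norm v1"]) auto
  have E2: "\<bar>eps_2\<bar> \<le> E" unfolding E_def eps_2_def e2
    using eps_decomp(3)[OF s2 b0] nv2 h0 h4 b0 by (intro eps_bound_E[of _ b "norm v2"]) auto
  have Ep: "\<bar>eps_p\<bar> \<le> E" unfolding E_def eps_p_def ep
    using eps_decomp(3)[OF sp b0] nvp h0 h4 b0 by (intro eps_bound_E[of _ b "norm vp"]) auto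
  have Em: "\<bar>eps_m\<bar> \<le> E" unfolding E_def eps_m_def em
    using eps_decomp(3)[OF sm b0] nvm h0 h4 b0 by (intro eps_bound_E[of _ b "norm vm"]) auto
  have Ea: "E \<le> a"
  proof -
    have "E = a * (4 * h) / (2 * pi)" unfolding E_def b_def by simp
    also have "\<dots> \<le> a * 1 / (2 * pi)" using h4 assms(1)
      by (intro divide_right_mono mult_left_mono) auto
    also have "\<dots> \<le> a" using assms(1) pi_gt3 by (simp add: field_simps)
    finally show ?thesis .
  qed
  have Sb: "\<bar>eps_1\<^sup>2 + eps_2\<^sup>2 - b\<^sup>2 * h\<^sup>2\<bar> \<le> 16 * b\<^sup>2 * h ^ 3"
  proof (rule S_bound)
    show "eps_1 = b * (Im w + (Arg (1 + v1) - Im v1))" unfolding eps_1_def e1 v1_def by simp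
    show "eps_2 = b * (Re w + (Arg (1 + v2) - Im v2))" unfolding eps_2_def e2 v2_def by simp
    show "(Im w)\<^sup>2 + (Re w)\<^sup>2 = h\<^sup>2" using cmod_power2[of w] nw by (simp add: add.commute)
    show "\<bar>Im w\<bar> \<le> h" using nw abs_Im_le_cmod by metis
    show "\<bar>Re w\<bar> \<le> h" using nw abs_Re_le_cmod by metis
    show "\<bar>Arg (1 + v1) - Im v1\<bar> \<le> 2 * h\<^sup>2" using arg_approx[OF s1] nv1 by simp
    show "\<bar>Arg (1 + v2) - Im v2\<bar> \<le> 2 * h\<^sup>2" using arg_approx[OF s2] nv2 by simp
  qed (use h0 h4 b0 in auto)
  have main: "kd / (8 * pi\<^sup>2) * a ^ 4 / (cmod z)\<^sup>2 = 1/2 * kd * (b\<^sup>2 * h\<^sup>2)"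
    unfolding b_def h_def r_def using rp[unfolded r_def]
    by (simp add: power2_eq_square power4_eq_xxxx field_simps)
  have remeq: "rem kp kd a x0 y0 l1 l2 =
      1/2 * kp * ((Dax a eps_1)\<^sup>2 + (Dax a eps_2)\<^sup>2) + 1/2 * kd * ((Dd a eps_p)\<^sup>2 + (Dd a eps_m)\<^sup>2)
      + 1/2 * kd * (((Ddi_p a eps_1)\<^sup>2 + (Ddi_m a eps_1)\<^sup>2 - eps_1\<^sup>2) + ((Ddi_p a eps_2)\<^sup>2 + (Ddi_m a eps_2)\<^sup>2 - eps_2\<^sup>2))
      + 1/2 * kd * (eps_1\<^sup>2 + eps_2\<^sup>2 - b\<^sup>2 * h\<^sup>2)"
    unfolding rem_def Fenergy_def Let_def eps_1_def[symmetric] eps_2_def[symmetric] eps_p_def[symmetric]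
      eps_m_def[symmetric] z_def[symmetric] main
    by (simp add: algebra_simps)
  have fin: "\<bar>rem kp kd a x0 y0 l1 l2\<bar> \<le> ((kp + kd) * 256 * b ^ 4 / (4 * a\<^sup>2) + 512 * kd * b ^ 3 / a + 8 * kd * b\<^sup>2) * h ^ 3"
    unfolding remeq
    by (rule assemble[OF assms(2,3,1) h0 _ b0 E_def])
      (use h4 D_bounds[OF assms(1) E1 Ea] D_bounds[OF assms(1) E2 Ea] D_bounds[OF assms(1) Ep Ea]
        D_bounds[OF assms(1) Em Ea] Sb in auto)
  show ?thesis using fin unfolding b_def h_def r_def z_def .
qed


theorem theorem5p2:
  fixes a kp kd x0 y0 \<rho> N :: real
  assumes "a > 0" and "kp > 0" and "kd > 0" and "0 < \<rho>" and "\<rho> < N"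
  shows "energy kp kd a x0 y0 \<rho> N
           = 1 / (8 * pi\<^sup>2) * kd * a\<^sup>2 * zeta_trunc a x0 y0 \<rho> N
             + (\<Sum>(l1, l2)\<in>annulus a x0 y0 \<rho> N. rem kp kd a x0 y0 l1 l2)
         \<and> (\<forall>e > 0. \<exists>R. \<forall>l1 l2. R < cmod (zl a x0 y0 l1 l2) \<longrightarrow>
           \<bar>rem kp kd a x0 y0 l1 l2 * (cmod (zl a x0 y0 l1 l2))\<^sup>2 / a\<^sup>2\<bar> < e)"
proof
  show "energy kp kd a x0 y0 \<rho> N
           = 1 / (8 * pi\<^sup>2) * kd * a\<^sup>2 * zeta_trunc a x0 y0 \<rho> N
             + (\<Sum>(l1, l2)\<in>annulus a x0 y0 \<rho> N. rem kp kd a x0 y0 l1 l2)"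
    by (rule part1[OF assms(1)])
next
  define C where "C = (kp + kd) * 256 * (a / (2 * pi)) ^ 4 / (4 * a\<^sup>2)
      + 512 * kd * (a / (2 * pi)) ^ 3 / a + 8 * kd * (a / (2 * pi))\<^sup>2"
  have C0: "C \<ge> 0" unfolding C_def using assms by simp
  show "\<forall>e > 0. \<exists>R. \<forall>l1 l2. R < cmod (zl a x0 y0 l1 l2) \<longrightarrow>
           \<bar>rem kp kd a x0 y0 l1 l2 * (cmod (zl a x0 y0 l1 l2))\<^sup>2 / a\<^sup>2\<bar> < e"
  proof (intro allI impI)
    fix e :: real assume e0: "e > 0"
    show "\<exists>R. \<forall>l1 l2. R < cmod (zl a x0 y0 l1 l2) \<longrightarrow>
           \<bar>rem kp kd a x0 y0 l1 l2 * (cmod (zl a x0 y0 l1 l2))\<^sup>2 / a\<^sup>2\<bar> < e"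
    proof (intro exI allI impI)
      fix l1 l2 :: int
      define r where "r = cmod (zl a x0 y0 l1 l2)"
      assume "max (4 * a) (C * a / e) < cmod (zl a x0 y0 l1 l2)"
      then have r4: "4 * a < r" and rC: "C * a / e < r" unfolding r_def by auto
      have rp: "r > 0" using r4 assms(1) by simp
      have rb: "\<bar>rem kp kd a x0 y0 l1 l2\<bar> \<le> C * (a / r) ^ 3"
        unfolding C_def r_def using rem_bound[OF assms(1) _ _, of kp kd x0 y0 l1 l2] assms r4[unfolded r_def]
        by simp
      have "\<bar>rem kp kd a x0 y0 l1 l2 * r\<^sup>2 / a\<^sup>2\<bar> = \<bar>rem kp kd a x0 y0 l1 l2\<bar> * (r\<^sup>2 / a\<^sup>2)"
        by (simp add: abs_mult)
      also have "\<dots> \<le> C * (a / r) ^ 3 * (r\<^sup>2 / a\<^sup>2)" using rb by (intro mult_right_mono) auto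
      also have "\<dots> = C * a / r" using rp assms(1) by (simp add: power2_eq_square power3_eq_cube field_simps)
      also have "\<dots> < e"
      proof -
        have "C * a < e * r" using rC e0 by (simp add: pos_divide_less_eq mult.commute)
        then show ?thesis using rp by (simp add: pos_divide_less_eq mult.commute)
      qed
      finally show "\<bar>rem kp kd a x0 y0 l1 l2 * (cmod (zl a x0 y0 l1 l2))\<^sup>2 / a\<^sup>2\<bar> < e"
        unfolding r_def .
    qed
  qed
qed

end
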